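(* For every integer $n\ge1$ and every $u\in V$, $\Pr(E_{6u})<\dfrac{36\,\zeta(3)}{\ln^{2}(n+1)}$, where $\zeta(3)=\sum_{i\ge1} i^{-3}$.
   Context: For an integer $n\ge1$, the $n$-octahedral graph $G'_n=(V,E')$ is the undirected graph with vertex set $V=\{u\in\mathbb{Z}^3:|u_1|+|u_2|+|u_3|=n\}$ and edge set $E'=\{\{v,w\}\subset V: v\neq w,\ |v_i-w_i|\le 1 \text{ for all } i=1,2,3\}$. For $u,v\in V$, $d_{uv}$ denotes the shortest-path distance in $G'_n$, and $Z_u=\left(\sum_{w\in V\setminus\{u\}} d_{uw}^{-2}\right)^{-1}$. The OSW random graph $G_n=(V,E)$ is the directed graph in which, for every $\{u,v\}\in E'$, both $(u,v),(v,u)\in E$, and in addition each vertex $u\in V$, independently of the others, chooses one vertex $v\in V\setminus\{u\}$ with probability $Z_u d_{uv}^{-2}$ and the long-range edge $(u,v)$ is added; $C_{uv}$ denotes the event that $u$ chooses $v$. For an ordered pair $(x,y)$ of distinct vertices, say $(x,y)$ is of type $s$ if $\{x,y\}\in E'$, and of type $w$ if $d_{xy}\ge2$ and $C_{xy}$ occurs. A C3 rooted at $u$ of type $(t_1,t_2,t_3)\in\{s,w\}^3$ is a triple $(u,a,b)$ of pairwise distinct vertices such that $(u,a)$ is of type $t_1$, $(a,b)$ is of type $t_2$ and $(b,u)$ is of type $t_3$. $E_{6u}$ is the event that there exists a C3 rooted at $u$ of type $(w,w,s)$. *)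

theory Defs
  imports "HOL-Probability.Probability"
begin

type_synonym vtx = "int \<times> int \<times> int"

definition octV :: "nat \<Rightarrow> vtx set" where
  "octV n = {(x,y,z). \<bar>x\<bar> + \<bar>y\<bar> + \<bar>z\<bar> = int n}"

definition octAdj :: "nat \<Rightarrow> vtx \<Rightarrow> vtx \<Rightarrow> bool" where
  "octAdj n v w \<longleftrightarrow> v \<in> octV n \<and> w \<in> octV n \<and> v \<noteq> w \<and>
     \<bar>fst v - fst w\<bar> \<le> 1 \<and> \<bar>fst (snd v) - fst (snd w)\<bar> \<le> 1 \<and>
     \<bar>snd (snd v) - snd (snd w)\<bar> \<le> 1"

definition octRel :: "nat \<Rightarrow> vtx rel" where
  "octRel n = {(v,w). octAdj n v w}"

definition octDist :: "nat \<Rightarrow> vtx \<Rightarrow> vtx \<Rightarrow> nat" where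
  "octDist n u v = (LEAST k. (u,v) \<in> octRel n ^^ k)"

definition octZ :: "nat \<Rightarrow> vtx \<Rightarrow> real" where
  "octZ n u = inverse (\<Sum>w\<in>octV n - {u}. 1 / (real (octDist n u w))\<^sup>2)"

definition choice_pmf :: "nat \<Rightarrow> vtx \<Rightarrow> vtx pmf" where
  "choice_pmf n u = embed_pmf (\<lambda>v. if v \<in> octV n - {u}
                                    then octZ n u / (real (octDist n u v))\<^sup>2 else 0)"

text \<open>Joint distribution of all choices (independent over vertices);
  outcome c: vertex u chooses c u.\<close>
definition OSW :: "nat \<Rightarrow> (vtx \<Rightarrow> vtx) pmf" where
  "OSW n = Pi_pmf (octV n) (0,0,0) (choice_pmf n)"

definition type_s :: "nat \<Rightarrow> vtx \<Rightarrow> vtx \<Rightarrow> bool" where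
  "type_s n x y \<longleftrightarrow> octAdj n x y"

definition type_w :: "nat \<Rightarrow> (vtx \<Rightarrow> vtx) \<Rightarrow> vtx \<Rightarrow> vtx \<Rightarrow> bool" where
  "type_w n c x y \<longleftrightarrow> x \<noteq> y \<and> octDist n x y \<ge> 2 \<and> c x = y"

definition E6 :: "nat \<Rightarrow> vtx \<Rightarrow> (vtx \<Rightarrow> vtx) set" where
  "E6 n u = {c. \<exists>a b. a \<in> octV n \<and> b \<in> octV n \<and> u \<noteq> a \<and> a \<noteq> b \<and> u \<noteq> b \<and>
       type_w n c u a \<and> type_w n c a b \<and> type_s n b u}"

definition zeta3 :: real where
  "zeta3 = (\<Sum>i. 1 / (real (Suc i))^3)"

end

theory Submission
  imports Defs "HOL-Analysis.Harmonic_Numbers"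
begin


lemma finite_octV: "finite (octV n)"
proof -
  have "octV n \<subseteq> {-int n..int n} \<times> {-int n..int n} \<times> {-int n..int n}"
    by (auto simp: octV_def)
  thus ?thesis by (rule finite_subset) auto
qed

lemma relpow_coord:
  assumes "(v,w) \<in> octRel n ^^ k"
  shows "\<bar>fst v - fst w\<bar> \<le> int k \<and> \<bar>fst (snd v) - fst (snd w)\<bar> \<le> int k \<and> \<bar>snd (snd v) - snd (snd w)\<bar> \<le> int k"
  using assms
proof (induction k arbitrary: w)
  case 0 thus ?case by simp
next
  case (Suc k)
  then obtain y where "(v,y) \<in> octRel n ^^ k" "(y,w) \<in> octRel n" by auto
  with Suc.IH[of y] show ?case by (auto simp: octRel_def octAdj_def)
qed

definition emb :: "int \<times> int \<times> int \<Rightarrow> int \<times> int \<times> int \<Rightarrow> vtx" where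
  "emb s p = (fst s * fst p, fst (snd s) * fst (snd p), snd (snd s) * snd (snd p))"

definition sgnok :: "int \<times> int \<times> int \<Rightarrow> bool" where
  "sgnok s \<longleftrightarrow> \<bar>fst s\<bar> = 1 \<and> \<bar>fst (snd s)\<bar> = 1 \<and> \<bar>snd (snd s)\<bar> = 1"

lemma step_exists:
  fixes x y z x' y' z' :: int
  assumes "x \<ge> 0" "y \<ge> 0" "z \<ge> 0" "x' \<ge> 0" "y' \<ge> 0" "z' \<ge> 0"
    "x + y + z = x' + y' + z'" "(x,y,z) \<noteq> (x',y',z')"
  shows "\<exists>a b c. a \<ge> 0 \<and> b \<ge> 0 \<and> c \<ge> 0 \<and> a + b + c = x + y + z \<and>
     \<bar>x - a\<bar> \<le> 1 \<and> \<bar>y - b\<bar> \<le> 1 \<and> \<bar>z - c\<bar> \<le> 1 \<and> (a,b,c) \<noteq> (x,y,z) \<and>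
     \<bar>a - x'\<bar> + \<bar>b - y'\<bar> + \<bar>c - z'\<bar> + 2 = \<bar>x - x'\<bar> + \<bar>y - y'\<bar> + \<bar>z - z'\<bar>"
proof -
  consider "x > x'" "y < y'" | "x > x'" "y \<ge> y'" "z < z'" | "x \<le> x'" "y > y'" "x < x'"
    | "x \<le> x'" "y > y'" "x = x'" "z < z'" | "x \<le> x'" "y \<le> y'" "z > z'" "x < x'"
    | "x \<le> x'" "y \<le> y'" "z > z'" "x = x'" "y < y'"
    | "x \<le> x'" "y \<le> y'" "z \<le> z'"
    using assms by linarith
  thus ?thesis
  proof cases
    case 1 thus ?thesis apply (rule_tac x="x-1" in exI, rule_tac x="y+1" in exI, rule_tac x=z in exI) using assms by auto
  next
    case 2 thus ?thesis apply (rule_tac x="x-1" in exI, rule_tac x="y" in exI, rule_tac x="z+1" in exI) using assms by auto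
  next
    case 3 thus ?thesis apply (rule_tac x="x+1" in exI, rule_tac x="y-1" in exI, rule_tac x=z in exI) using assms by auto
  next
    case 4 thus ?thesis apply (rule_tac x="x" in exI, rule_tac x="y-1" in exI, rule_tac x="z+1" in exI) using assms by auto
  next
    case 5 thus ?thesis apply (rule_tac x="x+1" in exI, rule_tac x="y" in exI, rule_tac x="z-1" in exI) using assms by auto
  next
    case 6 thus ?thesis apply (rule_tac x="x" in exI, rule_tac x="y+1" in exI, rule_tac x="z-1" in exI) using assms by auto
  next
    case 7 thus ?thesis using assms by auto
  qed
qed

lemma emb_in_V:
  assumes "sgnok s" "fst p \<ge> 0" "fst (snd p) \<ge> 0" "snd (snd p) \<ge> 0"
    "fst p + fst (snd p) + snd (snd p) = int n"
  shows "emb s p \<in> octV n"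
  using assms by (auto simp: emb_def octV_def sgnok_def abs_mult)

lemma emb_adj:
  assumes "sgnok s" "x \<ge> 0" "y \<ge> 0" "z \<ge> 0" "a \<ge> 0" "b \<ge> 0" "c \<ge> 0"
    "x + y + z = int n" "a + b + c = int n"
     "\<bar>x - a\<bar> \<le> 1" "\<bar>y - b\<bar> \<le> 1" "\<bar>z - c\<bar> \<le> 1" "(a,b,c) \<noteq> (x,y,z)"
  shows "octAdj n (emb s (x,y,z)) (emb s (a,b,c))"
proof -
  obtain s1 s2 s3 where s: "s = (s1,s2,s3)" by (cases s) auto
  have a: "\<bar>s1\<bar> = 1" "\<bar>s2\<bar> = 1" "\<bar>s3\<bar> = 1" using assms(1) by (auto simp: s sgnok_def)
  have e: "\<bar>s1 * x - s1 * a\<bar> = \<bar>x - a\<bar>" "\<bar>s2 * y - s2 * b\<bar> = \<bar>y - b\<bar>"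
     "\<bar>s3 * z - s3 * c\<bar> = \<bar>z - c\<bar>"
    by (simp_all add: right_diff_distrib[symmetric] abs_mult a)
  have ne: "s1 \<noteq> 0" "s2 \<noteq> 0" "s3 \<noteq> 0" using a by auto
  have "emb s (x,y,z) \<noteq> emb s (a,b,c)" using assms(13) ne by (auto simp: emb_def s)
  moreover have "emb s (x,y,z) \<in> octV n" "emb s (a,b,c) \<in> octV n"
    using emb_in_V[OF assms(1)] assms by auto
  ultimately show ?thesis using e assms(10-12) by (simp add: octAdj_def emb_def s)
qed

lemma face_path:
  assumes "sgnok s"
  shows "\<And>x y z. x \<ge> 0 \<Longrightarrow> y \<ge> 0 \<Longrightarrow> z \<ge> 0 \<Longrightarrow> x' \<ge> 0 \<Longrightarrow> y' \<ge> 0 \<Longrightarrow> z' \<ge> 0 \<Longrightarrow>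
    x + y + z = int n \<Longrightarrow> x' + y' + z' = int n \<Longrightarrow>
    \<bar>x - x'\<bar> + \<bar>y - y'\<bar> + \<bar>z - z'\<bar> = 2 * int k \<Longrightarrow>
    (emb s (x,y,z), emb s (x',y',z')) \<in> octRel n ^^ k"
proof (induction k)
  case 0
  then have "x = x'" "y = y'" "z = z'" by linarith+
  thus ?case by simp
next
  case (Suc k)
  have "(x,y,z) \<noteq> (x',y',z')" using Suc.prems by auto
  then obtain a b c where abc: "a \<ge> 0" "b \<ge> 0" "c \<ge> 0" "a + b + c = x + y + z"
     "\<bar>x - a\<bar> \<le> 1" "\<bar>y - b\<bar> \<le> 1" "\<bar>z - c\<bar> \<le> 1" "(a,b,c) \<noteq> (x,y,z)"
     "\<bar>a - x'\<bar> + \<bar>b - y'\<bar> + \<bar>c - z'\<bar> + 2 = \<bar>x - x'\<bar> + \<bar>y - y'\<bar> + \<bar>z - z'\<bar>"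
    using step_exists[of x y z x' y' z'] Suc.prems by metis
  have IH: "(emb s (a,b,c), emb s (x',y',z')) \<in> octRel n ^^ k"
    using Suc.prems abc by (intro Suc.IH) auto
  have "octAdj n (emb s (x,y,z)) (emb s (a,b,c))"
    using Suc.prems abc by (intro emb_adj[OF assms]) auto
  hence "(emb s (x,y,z), emb s (a,b,c)) \<in> octRel n" by (simp add: octRel_def)
  thus ?case using IH by (rule relpow_Suc_I2)
qed

definition sg :: "int \<Rightarrow> int" where "sg t = (if t \<ge> 0 then 1 else -1)"
definition sv :: "vtx \<Rightarrow> int \<times> int \<times> int" where
  "sv v = (sg (fst v), sg (fst (snd v)), sg (snd (snd v)))"
definition av :: "vtx \<Rightarrow> int \<times> int \<times> int" where
  "av v = (\<bar>fst v\<bar>, \<bar>fst (snd v)\<bar>, \<bar>snd (snd v)\<bar>)"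

lemma sgnok_sv: "sgnok (sv v)" by (simp add: sgnok_def sv_def sg_def)
lemma emb_sv_av: "emb (sv v) (av v) = v"
  by (cases v) (auto simp: emb_def sv_def av_def sg_def)

lemma emb_inj: "sgnok s \<Longrightarrow> emb s p = emb s q \<Longrightarrow> p = q"
  by (cases s; cases p; cases q) (auto simp: emb_def sgnok_def)

lemma reach_corner:
  assumes "v \<in> octV n"
  shows "(v, (int n,0,0)) \<in> (octRel n)\<^sup>* \<and> ((int n,0,0), v) \<in> (octRel n)\<^sup>*"
proof -
  obtain x y z where v: "av v = (x,y,z)" by (cases "av v") auto
  have xyz: "x \<ge> 0" "y \<ge> 0" "z \<ge> 0" "x + y + z = int n"
    using v assms by (auto simp: av_def octV_def)
  have l1: "\<bar>x - int n\<bar> + \<bar>y - 0\<bar> + \<bar>z - 0\<bar> = 2 * int (nat (y+z))" using xyz by auto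
  have l2: "\<bar>int n - x\<bar> + \<bar>0 - y\<bar> + \<bar>0 - z\<bar> = 2 * int (nat (y+z))" using xyz by auto
  have p1: "(v, emb (sv v) (int n,0,0)) \<in> (octRel n)\<^sup>*"
    using face_path[OF sgnok_sv, of x y z "int n" 0 0 n "nat (y+z)" v] xyz l1 v emb_sv_av[of v]
    by (auto simp: rtrancl_power)
  have p2: "(emb (sv v) (int n,0,0), v) \<in> (octRel n)\<^sup>*"
    using face_path[OF sgnok_sv, of "int n" 0 0 x y z n "nat (y+z)" v] xyz l2 v emb_sv_av[of v]
    by (auto simp: rtrancl_power)
  have ok1: "sgnok (-1,1,1)" "sgnok (1,1,1)" by (auto simp: sgnok_def)
  have c1: "((-int n,0,0), (0,int n,0)) \<in> (octRel n)\<^sup>*"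
    using face_path[OF ok1(1), of "int n" 0 0 0 "int n" 0 n n]
    by (auto simp: rtrancl_power emb_def)
  have c2: "((0,int n,0), (int n,0,0)) \<in> (octRel n)\<^sup>*"
    using face_path[OF ok1(2), of 0 "int n" 0 "int n" 0 0 n n]
    by (auto simp: rtrancl_power emb_def)
  have c3: "((int n,0,0), (0,int n,0)) \<in> (octRel n)\<^sup>*"
    using face_path[OF ok1(2), of "int n" 0 0 0 "int n" 0 n n]
    by (auto simp: rtrancl_power emb_def)
  have c4: "((0,int n,0), (-int n,0,0)) \<in> (octRel n)\<^sup>*"
    using face_path[OF ok1(1), of 0 "int n" 0 "int n" 0 0 n n]
    by (auto simp: rtrancl_power emb_def)
  have e: "emb (sv v) (int n,0,0) = (int n,0,0) \<or> emb (sv v) (int n,0,0) = (-int n,0,0)"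
    by (auto simp: emb_def sv_def sg_def)
  show ?thesis
  proof (cases "emb (sv v) (int n,0,0) = (int n,0,0)")
    case True thus ?thesis using p1 p2 by simp
  next
    case False
    hence "emb (sv v) (int n,0,0) = (-int n,0,0)" using e by simp
    thus ?thesis using p1 p2 c1 c2 c3 c4 by (metis rtrancl_trans)
  qed
qed

lemma conn: "v \<in> octV n \<Longrightarrow> w \<in> octV n \<Longrightarrow> \<exists>k. (v,w) \<in> octRel n ^^ k"
  using reach_corner[of v n] reach_corner[of w n] rtrancl_trans[of v "(int n,0,0)" "octRel n" w]
  by (auto simp: rtrancl_power)

lemma dist_path: "v \<in> octV n \<Longrightarrow> w \<in> octV n \<Longrightarrow> (v,w) \<in> octRel n ^^ octDist n v w"
  unfolding octDist_def by (rule LeastI_ex, rule conn)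

lemma dist_le: "(v,w) \<in> octRel n ^^ k \<Longrightarrow> octDist n v w \<le> k"
  unfolding octDist_def by (rule Least_le)

lemma dist_coord:
  assumes "v \<in> octV n" "w \<in> octV n"
  shows "\<bar>fst v - fst w\<bar> \<le> int (octDist n v w) \<and> \<bar>fst (snd v) - fst (snd w)\<bar> \<le> int (octDist n v w)
     \<and> \<bar>snd (snd v) - snd (snd w)\<bar> \<le> int (octDist n v w)"
  using relpow_coord[OF dist_path[OF assms]] .

lemma dist_pos: "v \<in> octV n \<Longrightarrow> w \<in> octV n \<Longrightarrow> v \<noteq> w \<Longrightarrow> octDist n v w \<ge> 1"
  using dist_path[of v n w] by (cases "octDist n v w") auto

lemma adj_dist: "octAdj n v w \<Longrightarrow> octDist n v w \<le> 1"
  by (rule dist_le) (simp add: octRel_def)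



definition Tset :: "nat \<Rightarrow> (nat \<times> nat) set" where
  "Tset x = {(a,b). 1 \<le> a + b \<and> a + b \<le> x}"

lemma finite_Tset: "finite (Tset x)"
  by (rule finite_subset[of _ "{..x} \<times> {..x}"]) (auto simp: Tset_def)

lemma sum_Tset: "(\<Sum>t\<in>Tset x. 1 / (real (fst t + snd t))\<^sup>2) = (\<Sum>j=1..x. (real j + 1) / (real j)\<^sup>2)"
proof -
  have eq: "Tset x = (\<lambda>(j,a). (a, j - a)) ` (SIGMA j:{1..x}. {0..j})"
    by (force simp: Tset_def image_iff)
  have inj: "inj_on (\<lambda>(j,a). (a, j - a)) (SIGMA j:{1..x}. {0..j})"
    by (auto simp: inj_on_def)
  have "(\<Sum>t\<in>Tset x. 1 / (real (fst t + snd t))\<^sup>2) =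
      (\<Sum>(j,a)\<in>(SIGMA j:{1..x}. {0..j}). 1 / (real j)\<^sup>2)"
    unfolding eq by (subst sum.reindex[OF inj]) (auto intro!: sum.cong)
  also have "\<dots> = (\<Sum>j=1..x. \<Sum>a=0..j. 1 / (real j)\<^sup>2)"
    by (rule sum.Sigma[symmetric]) auto
  also have "\<dots> = (\<Sum>j=1..x. (real j + 1) / (real j)\<^sup>2)"
    by (intro sum.cong) (auto simp: field_simps)
  finally show ?thesis .
qed

lemma fam_lower:
  assumes v: "v \<in> octV n" and inj: "inj_on f (Tset x)" and sub: "f ` Tset x \<subseteq> octV n - {v}"
    and d: "\<And>t. t \<in> Tset x \<Longrightarrow> octDist n v (f t) \<le> fst t + snd t"
  shows "(\<Sum>j=1..x. (real j + 1) / (real j)\<^sup>2) \<le> (\<Sum>w\<in>octV n - {v}. 1 / (real (octDist n v w))\<^sup>2)"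
proof -
  have "(\<Sum>j=1..x. (real j + 1) / (real j)\<^sup>2) = (\<Sum>t\<in>Tset x. 1 / (real (fst t + snd t))\<^sup>2)"
    by (rule sum_Tset[symmetric])
  also have "\<dots> \<le> (\<Sum>t\<in>Tset x. 1 / (real (octDist n v (f t)))\<^sup>2)"
  proof (intro sum_mono)
    fix t assume t: "t \<in> Tset x"
    have "f t \<in> octV n" "f t \<noteq> v" using sub t by auto
    hence "octDist n v (f t) \<ge> 1" using dist_pos v by metis
    thus "1 / (real (fst t + snd t))\<^sup>2 \<le> 1 / (real (octDist n v (f t)))\<^sup>2"
      using d[OF t] by (intro divide_left_mono power_mono) auto
  qed
  also have "\<dots> = (\<Sum>w\<in>f ` Tset x. 1 / (real (octDist n v w))\<^sup>2)"
    by (subst sum.reindex[OF inj]) simp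
  also have "\<dots> \<le> (\<Sum>w\<in>octV n - {v}. 1 / (real (octDist n v w))\<^sup>2)"
    by (intro sum_mono2 sub) (auto intro: finite_octV)
  finally show ?thesis .
qed

lemma harm_part:
  assumes "x \<ge> 7"
  shows "ln (real x + 1) + 3/2 \<le> (\<Sum>j=1..x. (real j + 1) / (real j)\<^sup>2)"
proof -
  have split: "(\<Sum>j=1..x. (real j + 1) / (real j)\<^sup>2) = harm x + (\<Sum>j=1..x. 1 / (real j)\<^sup>2)"
    unfolding harm_def by (subst sum.distrib[symmetric]) (auto intro!: sum.cong simp: field_simps power2_eq_square)
  have "(\<Sum>j=1..7. 1 / (real j)\<^sup>2) \<le> (\<Sum>j=1..x. 1 / (real j)\<^sup>2)"
    using assms by (intro sum_mono2) auto
  moreover have "(\<Sum>j=1..(7::nat). 1 / (real j)\<^sup>2) \<ge> 3/2"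
    by (simp add: numeral_eq_Suc power2_eq_square)
  ultimately show ?thesis using split ln_le_harm[of x] by linarith
qed

lemma ln3: "ln (3::real) \<le> 3/2"
proof -
  have "exp (3/2::real) = exp (3/4) * exp (3/4)" by (simp add: exp_add[symmetric])
  also have "\<dots> \<ge> (1 + 3/4) * (1 + 3/4)"
    using exp_ge_add_one_self[of "3/4::real"] by (intro mult_mono) auto
  finally have "3 \<le> exp (3/2::real)" by simp
  thus ?thesis using ln_le_cancel_iff[of 3 "exp (3/2)"] by simp
qed



lemma case_lower:
  assumes s: "sgnok s" and nn: "X \<ge> 0" "Y \<ge> 0" "Z \<ge> 0" and sum: "X + Y + Z = int n"
    and f: "f = (\<lambda>t. emb s (X - int (fst t) - int (snd t), Y + int (fst t), Z + int (snd t)))"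
  shows "inj_on f (Tset (nat X)) \<and> f ` Tset (nat X) \<subseteq> octV n - {emb s (X,Y,Z)} \<and>
     (\<forall>t\<in>Tset (nat X). octDist n (emb s (X,Y,Z)) (f t) \<le> fst t + snd t)"
proof (intro conjI ballI subsetI)
  show "inj_on f (Tset (nat X))"
    by (auto simp: inj_on_def f dest!: emb_inj[OF s])
next
  fix w assume "w \<in> f ` Tset (nat X)"
  then obtain a b where ab: "1 \<le> a + b" "a + b \<le> nat X" and w: "w = f (a,b)" by (auto simp: Tset_def)
  have "w \<in> octV n" unfolding w f using ab nn sum by (intro emb_in_V[OF s]) auto
  moreover have "w \<noteq> emb s (X,Y,Z)" unfolding w f using ab by (auto dest!: emb_inj[OF s])
  ultimately show "w \<in> octV n - {emb s (X,Y,Z)}" by simp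
next
  fix t assume "t \<in> Tset (nat X)"
  then obtain a b where ab: "1 \<le> a + b" "a + b \<le> nat X" and t: "t = (a,b)" by (auto simp: Tset_def)
  have "(emb s (X,Y,Z), f t) \<in> octRel n ^^ (a + b)"
    unfolding f t using ab nn sum by (intro face_path[OF s]) auto
  thus "octDist n (emb s (X,Y,Z)) (f t) \<le> fst t + snd t" using dist_le t by auto
qed

lemma case_lower2:
  assumes s: "sgnok s" and nn: "X \<ge> 0" "Y \<ge> 0" "Z \<ge> 0" and sum: "X + Y + Z = int n"
    and f: "f = (\<lambda>t. emb s (X + int (fst t), Y - int (fst t) - int (snd t), Z + int (snd t)))"
  shows "inj_on f (Tset (nat Y)) \<and> f ` Tset (nat Y) \<subseteq> octV n - {emb s (X,Y,Z)} \<and>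
     (\<forall>t\<in>Tset (nat Y). octDist n (emb s (X,Y,Z)) (f t) \<le> fst t + snd t)"
proof (intro conjI ballI subsetI)
  show "inj_on f (Tset (nat Y))"
    by (auto simp: inj_on_def f dest!: emb_inj[OF s])
next
  fix w assume "w \<in> f ` Tset (nat Y)"
  then obtain a b where ab: "1 \<le> a + b" "a + b \<le> nat Y" and w: "w = f (a,b)" by (auto simp: Tset_def)
  have "w \<in> octV n" unfolding w f using ab nn sum by (intro emb_in_V[OF s]) auto
  moreover have "w \<noteq> emb s (X,Y,Z)" unfolding w f using ab by (auto dest!: emb_inj[OF s])
  ultimately show "w \<in> octV n - {emb s (X,Y,Z)}" by simp
next
  fix t assume "t \<in> Tset (nat Y)"
  then obtain a b where ab: "1 \<le> a + b" "a + b \<le> nat Y" and t: "t = (a,b)" by (auto simp: Tset_def)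
  have "(emb s (X,Y,Z), f t) \<in> octRel n ^^ (a + b)"
    unfolding f t using ab nn sum by (intro face_path[OF s]) auto
  thus "octDist n (emb s (X,Y,Z)) (f t) \<le> fst t + snd t" using dist_le t by auto
qed

lemma case_lower3:
  assumes s: "sgnok s" and nn: "X \<ge> 0" "Y \<ge> 0" "Z \<ge> 0" and sum: "X + Y + Z = int n"
    and f: "f = (\<lambda>t. emb s (X + int (fst t), Y + int (snd t), Z - int (fst t) - int (snd t)))"
  shows "inj_on f (Tset (nat Z)) \<and> f ` Tset (nat Z) \<subseteq> octV n - {emb s (X,Y,Z)} \<and>
     (\<forall>t\<in>Tset (nat Z). octDist n (emb s (X,Y,Z)) (f t) \<le> fst t + snd t)"
proof (intro conjI ballI subsetI)
  show "inj_on f (Tset (nat Z))"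
    by (auto simp: inj_on_def f dest!: emb_inj[OF s])
next
  fix w assume "w \<in> f ` Tset (nat Z)"
  then obtain a b where ab: "1 \<le> a + b" "a + b \<le> nat Z" and w: "w = f (a,b)" by (auto simp: Tset_def)
  have "w \<in> octV n" unfolding w f using ab nn sum by (intro emb_in_V[OF s]) auto
  moreover have "w \<noteq> emb s (X,Y,Z)" unfolding w f using ab by (auto dest!: emb_inj[OF s])
  ultimately show "w \<in> octV n - {emb s (X,Y,Z)}" by simp
next
  fix t assume "t \<in> Tset (nat Z)"
  then obtain a b where ab: "1 \<le> a + b" "a + b \<le> nat Z" and t: "t = (a,b)" by (auto simp: Tset_def)
  have "(emb s (X,Y,Z), f t) \<in> octRel n ^^ (a + b)"
    unfolding f t using ab nn sum by (intro face_path[OF s]) auto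
  thus "octDist n (emb s (X,Y,Z)) (f t) \<le> fst t + snd t" using dist_le t by auto
qed

lemma ln_bound_aux:
  fixes X :: int
  assumes "3 * X \<ge> int n" "n \<ge> 21" "X \<ge> 0"
    "(\<Sum>j=1..nat X. (real j + 1) / (real j)\<^sup>2) \<le> S"
  shows "ln (real n + 1) \<le> S"
proof -
  have X7: "nat X \<ge> 7" using assms by linarith
  have "real_of_int (int n) \<le> real_of_int (3 * X)" using assms(1) by (simp only: of_int_le_iff)
  hence "real n + 1 \<le> 3 * (real (nat X) + 1)" using assms(3) by simp
  hence "ln (real n + 1) \<le> ln (3 * (real (nat X) + 1))" by (intro ln_mono) auto
  also have "\<dots> = ln 3 + ln (real (nat X) + 1)" using ln_mult[of 3 "real (nat X) + 1"] by simp
  also have "\<dots> \<le> 3/2 + ln (real (nat X) + 1)" using ln3 by simp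
  also have "\<dots> \<le> S" using harm_part[OF X7] assms(4) by linarith
  finally show ?thesis .
qed

lemma vertex_lower:
  assumes n: "n \<ge> 21" and v: "v \<in> octV n"
  shows "ln (real n + 1) \<le> (\<Sum>w\<in>octV n - {v}. 1 / (real (octDist n v w))\<^sup>2)"
proof -
  obtain X Y Z where a: "av v = (X,Y,Z)" by (cases "av v") auto
  have nn: "X \<ge> 0" "Y \<ge> 0" "Z \<ge> 0" and sm: "X + Y + Z = int n"
    using a v by (auto simp: av_def octV_def)
  have ve: "v = emb (sv v) (X,Y,Z)" using emb_sv_av[of v] a by simp
  consider "X \<ge> Y" "X \<ge> Z" | "Y \<ge> X" "Y \<ge> Z" | "Z \<ge> X" "Z \<ge> Y" by linarith
  thus ?thesis
  proof cases
    case 1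
    define f where "f = (\<lambda>t::nat\<times>nat. emb (sv v) (X - int (fst t) - int (snd t), Y + int (fst t), Z + int (snd t)))"
    have h: "inj_on f (Tset (nat X))" "f ` Tset (nat X) \<subseteq> octV n - {v}"
       "\<forall>t\<in>Tset (nat X). octDist n v (f t) \<le> fst t + snd t"
      using case_lower[OF sgnok_sv nn sm f_def] unfolding ve[symmetric] by auto
    have "(\<Sum>j=1..nat X. (real j + 1) / (real j)\<^sup>2) \<le> (\<Sum>w\<in>octV n - {v}. 1 / (real (octDist n v w))\<^sup>2)"
      by (rule fam_lower[OF v h(1) h(2)]) (use h(3) in auto)
    thus ?thesis by (intro ln_bound_aux[where X=X]) (use 1 n nn sm in auto)
  next
    case 2
    define f where "f = (\<lambda>t::nat\<times>nat. emb (sv v) (X + int (fst t), Y - int (fst t) - int (snd t), Z + int (snd t)))"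
    have h: "inj_on f (Tset (nat Y))" "f ` Tset (nat Y) \<subseteq> octV n - {v}"
       "\<forall>t\<in>Tset (nat Y). octDist n v (f t) \<le> fst t + snd t"
      using case_lower2[OF sgnok_sv nn sm f_def] unfolding ve[symmetric] by auto
    have "(\<Sum>j=1..nat Y. (real j + 1) / (real j)\<^sup>2) \<le> (\<Sum>w\<in>octV n - {v}. 1 / (real (octDist n v w))\<^sup>2)"
      by (rule fam_lower[OF v h(1) h(2)]) (use h(3) in auto)
    thus ?thesis by (intro ln_bound_aux[where X=Y]) (use 2 n nn sm in auto)
  next
    case 3
    define f where "f = (\<lambda>t::nat\<times>nat. emb (sv v) (X + int (fst t), Y + int (snd t), Z - int (fst t) - int (snd t)))"
    have h: "inj_on f (Tset (nat Z))" "f ` Tset (nat Z) \<subseteq> octV n - {v}"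
       "\<forall>t\<in>Tset (nat Z). octDist n v (f t) \<le> fst t + snd t"
      using case_lower3[OF sgnok_sv nn sm f_def] unfolding ve[symmetric] by auto
    have "(\<Sum>j=1..nat Z. (real j + 1) / (real j)\<^sup>2) \<le> (\<Sum>w\<in>octV n - {v}. 1 / (real (octDist n v w))\<^sup>2)"
      by (rule fam_lower[OF v h(1) h(2)]) (use h(3) in auto)
    thus ?thesis by (intro ln_bound_aux[where X=Z]) (use 3 n nn sm in auto)
  qed
qed



definition hh :: "nat \<Rightarrow> real" where
  "hh j = 1 / ((real (max 2 j))\<^sup>2 * (real (max 2 (j - 1)))\<^sup>2)"

definition Sq :: "nat \<Rightarrow> (int \<times> int) set" where
  "Sq M = {-int M..int M} \<times> {-int M..int M}"

definition FF :: "nat \<Rightarrow> real" where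
  "FF M = (\<Sum>pq\<in>Sq M. hh (nat (max \<bar>fst pq\<bar> \<bar>snd pq\<bar>)))"

lemma card_Sq: "card (Sq M) = (2 * M + 1)^2"
proof -
  have "nat (2 * int M + 1) = 2 * M + 1" by arith
  thus ?thesis by (simp add: Sq_def card_cartesian_product power2_eq_square)
qed

lemma finite_Sq: "finite (Sq M)" by (simp add: Sq_def)

lemma FF_Suc: "FF (Suc M) = FF M + real (8 * M + 8) * hh (Suc M)"
proof -
  have sub: "Sq M \<subseteq> Sq (Suc M)" by (auto simp: Sq_def)
  have "FF (Suc M) = (\<Sum>pq\<in>Sq (Suc M) - Sq M. hh (nat (max \<bar>fst pq\<bar> \<bar>snd pq\<bar>))) + FF M"
    unfolding FF_def by (rule sum.subset_diff[OF sub finite_Sq])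
  also have "(\<Sum>pq\<in>Sq (Suc M) - Sq M. hh (nat (max \<bar>fst pq\<bar> \<bar>snd pq\<bar>))) =
      (\<Sum>pq\<in>Sq (Suc M) - Sq M. hh (Suc M))"
  proof (intro sum.cong refl)
    fix pq assume "pq \<in> Sq (Suc M) - Sq M"
    hence "max \<bar>fst pq\<bar> \<bar>snd pq\<bar> = int (Suc M)" by (cases pq) (auto simp: Sq_def)
    thus "hh (nat (max \<bar>fst pq\<bar> \<bar>snd pq\<bar>)) = hh (Suc M)" by (metis nat_int)
  qed
  also have "\<dots> = real (card (Sq (Suc M) - Sq M)) * hh (Suc M)" by simp
  also have "card (Sq (Suc M) - Sq M) = 8 * M + 8"
    using card_Diff_subset[OF finite_Sq sub] card_Sq[of M] card_Sq[of "Suc M"]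
    by (simp add: power2_eq_square algebra_simps)
  finally show ?thesis by simp
qed

lemma FF_0: "FF 0 = 1/16"
  by (simp add: FF_def Sq_def hh_def)

lemma FF_2: "FF 2 = 25/16"
  using FF_Suc[of 0] FF_Suc[of 1] FF_0 by (simp add: numeral_2_eq_2 hh_def)

lemma key_ineq:
  fixes m :: real assumes m2: "m \<ge> 2"
  shows "8 * (m+1) * (1 / ((m + 1)\<^sup>2 * m\<^sup>2)) \<le> 24 / (5 * m\<^sup>2) - 24 / (5 * (m+1)\<^sup>2)"
proof -
  have P: "m\<^sup>2 * (m+1)\<^sup>2 > 0" using m2 by simp
  have r: "24 / (5 * m\<^sup>2) - 24 / (5 * (m+1)\<^sup>2) = (24 * (2 * m + 1) / 5) / (m\<^sup>2 * (m+1)\<^sup>2)"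
  proof -
    have nz: "m \<noteq> 0" "m + 1 \<noteq> 0" using m2 by auto
    show ?thesis using nz by (simp add: field_simps) (simp add: algebra_simps power2_eq_square)
  qed
  have l: "8 * (m+1) * (1 / ((m + 1)\<^sup>2 * m\<^sup>2)) = (8 * (m+1)) / (m\<^sup>2 * (m+1)\<^sup>2)"
    by (simp add: mult.commute)
  have "(8 * (m+1)) / (m\<^sup>2 * (m+1)\<^sup>2) \<le> (24 * (2 * m + 1) / 5) / (m\<^sup>2 * (m+1)\<^sup>2)"
    using m2 P by (intro divide_right_mono) auto
  thus ?thesis using l r by (simp add: mult.commute)
qed

lemma FF_bound_ge2: "M \<ge> 2 \<Longrightarrow> FF M \<le> 221/80 - 24 / (5 * (real M)\<^sup>2)"
proof (induction M rule: dec_induct)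
  case base thus ?case using FF_2 by simp
next
  case (step M)
  have hM: "hh (Suc M) = 1 / ((real M + 1)\<^sup>2 * (real M)\<^sup>2)"
    using step(1) by (simp add: hh_def max_def)
  have M2: "real M \<ge> 2" using step(1) by simp
  have key: "real (8 * M + 8) * (1 / ((real M + 1)\<^sup>2 * (real M)\<^sup>2)) \<le>
      24 / (5 * (real M)\<^sup>2) - 24 / (5 * (real (Suc M))\<^sup>2)"
    using key_ineq[OF M2] by (simp add: algebra_simps)
  show ?case using step(3) FF_Suc[of M] hM key by simp
qed

lemma FF_bound: "FF M \<le> 221/80"
proof -
  have "FF M \<le> FF (max 2 M)"
    unfolding FF_def
    by (intro sum_mono2 finite_Sq) (auto simp: Sq_def hh_def)
  also have "\<dots> \<le> 221/80" using FF_bound_ge2[of "max 2 M"]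
    by (smt (verit) divide_nonneg_nonneg max.cobounded1 of_nat_0_le_iff zero_le_power2)
  finally show ?thesis .
qed



lemma hh_nonneg: "hh j \<ge> 0" by (simp add: hh_def)

lemma half_sum:
  assumes u: "u \<in> octV n" and S: "S \<subseteq> octV n"
    and inj: "\<And>a b. a \<in> S \<Longrightarrow> b \<in> S \<Longrightarrow> fst a = fst b \<Longrightarrow> fst (snd a) = fst (snd b) \<Longrightarrow> a = b"
  shows "(\<Sum>a\<in>S. hh (nat (max \<bar>fst a - fst u\<bar> \<bar>fst (snd a) - fst (snd u)\<bar>))) \<le> FF (2 * n)"
proof -
  define \<pi> where "\<pi> = (\<lambda>a::vtx. (fst a - fst u, fst (snd a) - fst (snd u)))"
  have fin: "finite S" using S finite_octV finite_subset by blast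
  have ij: "inj_on \<pi> S" using inj by (auto simp: inj_on_def \<pi>_def)
  have "(\<Sum>a\<in>S. hh (nat (max \<bar>fst a - fst u\<bar> \<bar>fst (snd a) - fst (snd u)\<bar>))) =
        (\<Sum>pq\<in>\<pi> ` S. hh (nat (max \<bar>fst pq\<bar> \<bar>snd pq\<bar>)))"
    by (subst sum.reindex[OF ij]) (simp add: \<pi>_def)
  also have "\<dots> \<le> FF (2 * n)"
    unfolding FF_def
  proof (intro sum_mono2 finite_Sq hh_nonneg subsetI)
    fix pq assume "pq \<in> \<pi> ` S"
    then obtain a where a: "a \<in> S" "pq = \<pi> a" by auto
    have "a \<in> octV n" using a S by auto
    thus "pq \<in> Sq (2 * n)" using u a
      by (cases a; cases u) (auto simp: \<pi>_def Sq_def octV_def)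
  qed
  finally show ?thesis .
qed

lemma Vsum:
  assumes u: "u \<in> octV n"
  shows "(\<Sum>a\<in>octV n. hh (nat (max \<bar>fst a - fst u\<bar> \<bar>fst (snd a) - fst (snd u)\<bar>))) \<le> 2 * (221/80)"
proof -
  define Vp where "Vp = {a \<in> octV n. snd (snd a) \<ge> 0}"
  define Vm where "Vm = {a \<in> octV n. snd (snd a) < 0}"
  have un: "octV n = Vp \<union> Vm" and dj: "Vp \<inter> Vm = {}" by (auto simp: Vp_def Vm_def)
  have fp: "finite Vp" "finite Vm" using finite_octV by (auto simp: Vp_def Vm_def)
  have 1: "(\<Sum>a\<in>Vp. hh (nat (max \<bar>fst a - fst u\<bar> \<bar>fst (snd a) - fst (snd u)\<bar>))) \<le> FF (2 * n)"
    by (rule half_sum[OF u]) (auto simp: Vp_def octV_def)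
  have 2: "(\<Sum>a\<in>Vm. hh (nat (max \<bar>fst a - fst u\<bar> \<bar>fst (snd a) - fst (snd u)\<bar>))) \<le> FF (2 * n)"
    by (rule half_sum[OF u]) (auto simp: Vm_def octV_def)
  show ?thesis
    unfolding un sum.union_disjoint[OF fp dj] using 1 2 FF_bound[of "2*n"] by linarith
qed



definition tt :: "int \<Rightarrow> int \<Rightarrow> int" where "tt s d = (if s = 0 then \<bar>d\<bar> else s * d)"

definition L27 :: "vtx list" where
  "L27 = [(a,b,c). a \<leftarrow> [-1,0,1], b \<leftarrow> [-1,0,1], c \<leftarrow> [-1,0,1]]"

lemma L27_count:
  assumes "s1 \<in> {-1,0,1}" "s2 \<in> {-1,0,1}" "s3 \<in> {-1,0,1}" "(s1,s2,s3) \<noteq> (0,0,0)"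
  shows "length (filter (\<lambda>d. d \<noteq> (0,0,0) \<and> tt s1 (fst d) + tt s2 (fst (snd d)) + tt s3 (snd (snd d)) = 0) L27) \<le> 6"
proof -
  have "s1 = -1 \<or> s1 = 0 \<or> s1 = 1" "s2 = -1 \<or> s2 = 0 \<or> s2 = 1" "s3 = -1 \<or> s3 = 0 \<or> s3 = 1"
    using assms by auto
  thus ?thesis using assms(4) unfolding L27_def
    by (elim disjE) (simp_all add: tt_def)
qed

lemma abs_step: "d \<in> {-1,0,1} \<Longrightarrow> \<bar>u + d\<bar> = \<bar>u\<bar> + tt (sgn u) d"
  by (auto simp: tt_def sgn_if abs_if)

lemma set_L27: "set L27 = {-1,0,1} \<times> {-1,0,1} \<times> {-1,0,1}"
  by (simp add: L27_def)

lemma abs1: "\<bar>d::int\<bar> \<le> 1 \<Longrightarrow> d \<in> {-1,0,1}" by auto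

lemma nbr_card:
  assumes u: "u \<in> octV n" and n: "n \<ge> 1"
  shows "card {b \<in> octV n. octAdj n b u} \<le> 6"
proof -
  obtain u1 u2 u3 where ue: "u = (u1,u2,u3)" by (cases u) auto
  define P where "P = (\<lambda>d::vtx. d \<noteq> (0,0,0) \<and> tt (sgn u1) (fst d) + tt (sgn u2) (fst (snd d)) + tt (sgn u3) (snd (snd d)) = 0)"
  have sgns: "sgn u1 \<in> {-1,0,1}" "sgn u2 \<in> {-1,0,1}" "sgn u3 \<in> {-1,0,1}" by (auto simp: sgn_if)
  have "\<not> (u1 = 0 \<and> u2 = 0 \<and> u3 = 0)" using u n ue by (auto simp: octV_def)
  hence nz: "(sgn u1, sgn u2, sgn u3) \<noteq> (0,0,0)" by (simp add: sgn_0_0)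
  have sub: "{b \<in> octV n. octAdj n b u} \<subseteq> (\<lambda>d. (u1 + fst d, u2 + fst (snd d), u3 + snd (snd d))) ` set (filter P L27)"
  proof
    fix b assume b: "b \<in> {b \<in> octV n. octAdj n b u}"
    obtain b1 b2 b3 where be: "b = (b1,b2,b3)" by (cases b) auto
    define d1 where "d1 = b1 - u1"
    define d2 where "d2 = b2 - u2"
    define d3 where "d3 = b3 - u3"
    have "\<bar>d1\<bar> \<le> 1" "\<bar>d2\<bar> \<le> 1" "\<bar>d3\<bar> \<le> 1"
      using b be ue by (simp_all add: octAdj_def d1_def d2_def d3_def abs_minus_commute)
    hence dd: "d1 \<in> {-1,0,1}" "d2 \<in> {-1,0,1}" "d3 \<in> {-1,0,1}" by (simp_all only: abs1)
    have L: "(d1,d2,d3) \<in> set L27" using dd unfolding set_L27 by blast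
    have ne: "(d1,d2,d3) \<noteq> (0,0,0)" using b be ue by (auto simp: octAdj_def d1_def d2_def d3_def)
    have "\<bar>u1 + d1\<bar> + \<bar>u2 + d2\<bar> + \<bar>u3 + d3\<bar> = \<bar>u1\<bar> + \<bar>u2\<bar> + \<bar>u3\<bar>"
      using b be ue u by (auto simp: octV_def d1_def d2_def d3_def)
    hence "P (d1,d2,d3)" using ne abs_step[OF dd(1), of u1] abs_step[OF dd(2), of u2] abs_step[OF dd(3), of u3]
      by (simp add: P_def)
    moreover have "b = (u1 + d1, u2 + d2, u3 + d3)" using be by (simp add: d1_def d2_def d3_def)
    ultimately show "b \<in> (\<lambda>d. (u1 + fst d, u2 + fst (snd d), u3 + snd (snd d))) ` set (filter P L27)"
      using L by force
  qed
  have "card {b \<in> octV n. octAdj n b u} \<le> card ((\<lambda>d. (u1 + fst d, u2 + fst (snd d), u3 + snd (snd d))) ` set (filter P L27))"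
    by (intro card_mono sub) auto
  also have "\<dots> \<le> card (set (filter P L27))" by (rule card_image_le) auto
  also have "\<dots> \<le> length (filter P L27)" by (rule card_length)
  also have "\<dots> \<le> 6" unfolding P_def by (rule L27_count[OF sgns nz])
  finally show ?thesis .
qed



lemma dist_self: "octDist n v v = 0"
proof -
  have "(v,v) \<in> octRel n ^^ 0" by simp
  from dist_le[OF this] show ?thesis by simp
qed

lemma sumZ_pos:
  assumes v: "v \<in> octV n" and n: "n \<ge> 1"
  shows "(\<Sum>w\<in>octV n - {v}. 1 / (real (octDist n v w))\<^sup>2) > 0"
proof -
  obtain v1 v2 v3 where ve: "v = (v1,v2,v3)" by (cases v) auto
  have mv: "(-v1,-v2,-v3) \<in> octV n - {v}" using v n ve by (auto simp: octV_def)
  have "0 < 1 / (real (octDist n v (-v1,-v2,-v3)))\<^sup>2"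
    using dist_pos[of v n "(-v1,-v2,-v3)"] v mv by auto
  also have "\<dots> \<le> (\<Sum>w\<in>octV n - {v}. 1 / (real (octDist n v w))\<^sup>2)"
    by (rule member_le_sum[OF mv]) (auto intro: finite_octV)
  finally show ?thesis .
qed

lemma pmf_choice:
  assumes v: "v \<in> octV n" and n: "n \<ge> 1"
  shows "pmf (choice_pmf n v) w = (if w \<in> octV n - {v} then octZ n v / (real (octDist n v w))\<^sup>2 else 0)"
  unfolding choice_pmf_def
proof (rule pmf_embed_pmf)
  fix x show "0 \<le> (if x \<in> octV n - {v} then octZ n v / (real (octDist n v x))\<^sup>2 else 0)"
    by (auto simp: octZ_def intro!: sum_nonneg divide_nonneg_nonneg)
next
  let ?S = "(\<Sum>w\<in>octV n - {v}. 1 / (real (octDist n v w))\<^sup>2)"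
  have pos: "?S > 0" by (rule sumZ_pos[OF v n])
  have "(\<integral>\<^sup>+x. ennreal (if x \<in> octV n - {v} then octZ n v / (real (octDist n v x))\<^sup>2 else 0) \<partial>count_space UNIV)
     = (\<Sum>x\<in>octV n - {v}. ennreal (if x \<in> octV n - {v} then octZ n v / (real (octDist n v x))\<^sup>2 else 0))"
    by (rule nn_integral_count_space') (auto intro: finite_octV)
  also have "\<dots> = ennreal (\<Sum>x\<in>octV n - {v}. octZ n v / (real (octDist n v x))\<^sup>2)"
    using pos by (subst sum_ennreal) (auto simp: octZ_def intro!: sum.cong)
  also have "(\<Sum>x\<in>octV n - {v}. octZ n v / (real (octDist n v x))\<^sup>2) = octZ n v * ?S"
    by (simp add: sum_distrib_left divide_inverse)
  also have "\<dots> = 1" using pos by (simp add: octZ_def)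
  finally show "(\<integral>\<^sup>+x. ennreal (if x \<in> octV n - {v} then octZ n v / (real (octDist n v x))\<^sup>2 else 0) \<partial>count_space UNIV) = 1"
    by simp
qed

lemma prob_pair:
  assumes u: "u \<in> octV n" and a: "a \<in> octV n" and ua: "u \<noteq> a"
  shows "measure_pmf.prob (OSW n) {c. c u = a \<and> c a = b} = pmf (choice_pmf n u) a * pmf (choice_pmf n a) b"
proof -
  define B where "B = (\<lambda>x. if x = u then {a} else if x = a then {b} else (UNIV::vtx set))"
  have fin: "finite (octV n)" by (rule finite_octV)
  have "{c. c u = a \<and> c a = b} \<inter> set_pmf (OSW n) = PiE_dflt (octV n) (0,0,0) B \<inter> set_pmf (OSW n)"
  proof -
    have sub: "set_pmf (OSW n) \<subseteq> {f. \<forall>x. x \<notin> octV n \<longrightarrow> f x = (0,0,0)}"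
      unfolding OSW_def by (rule set_Pi_pmf_subset[OF fin])
    show ?thesis
    proof (intro equalityI subsetI)
      fix c assume c: "c \<in> {c. c u = a \<and> c a = b} \<inter> set_pmf (OSW n)"
      hence out: "\<forall>x. x \<notin> octV n \<longrightarrow> c x = (0,0,0)" using sub by blast
      have "c \<in> PiE_dflt (octV n) (0,0,0) B" unfolding PiE_dflt_def
      proof (intro CollectI allI conjI impI)
        fix x assume "x \<in> octV n" show "c x \<in> B x" using c by (simp add: B_def)
      next
        fix x assume "x \<notin> octV n" thus "c x = (0,0,0)" using out by blast
      qed
      thus "c \<in> PiE_dflt (octV n) (0,0,0) B \<inter> set_pmf (OSW n)" using c by blast
    next
      fix c assume c: "c \<in> PiE_dflt (octV n) (0,0,0) B \<inter> set_pmf (OSW n)"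
      hence "c \<in> PiE_dflt (octV n) (0,0,0) B" by blast
      hence "\<forall>x. (x \<in> octV n \<longrightarrow> c x \<in> B x) \<and> (x \<notin> octV n \<longrightarrow> c x = (0,0,0))"
        by (simp only: PiE_dflt_def mem_Collect_eq)
      hence "c u \<in> B u" "c a \<in> B a" using u a by blast+
      thus "c \<in> {c. c u = a \<and> c a = b} \<inter> set_pmf (OSW n)" using c ua by (simp add: B_def)
    qed
  qed
  hence "measure_pmf.prob (OSW n) {c. c u = a \<and> c a = b} = measure_pmf.prob (OSW n) (PiE_dflt (octV n) (0,0,0) B)"
    using measure_Int_set_pmf[of "OSW n" "{c. c u = a \<and> c a = b}"] measure_Int_set_pmf[of "OSW n" "PiE_dflt (octV n) (0,0,0) B"]
    by simp
  also have "\<dots> = (\<Prod>x\<in>octV n. measure_pmf.prob (choice_pmf n x) (B x))"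
    unfolding OSW_def by (rule measure_Pi_pmf_PiE_dflt[OF fin])
  also have "\<dots> = (\<Prod>x\<in>{u,a}. measure_pmf.prob (choice_pmf n x) (B x))"
  proof (intro prod.mono_neutral_right fin)
    show "{u,a} \<subseteq> octV n" using u a by simp
  next
    show "\<forall>x\<in>octV n - {u,a}. measure_pmf.prob (choice_pmf n x) (B x) = 1"
      by (simp add: B_def)
  qed
  also have "\<dots> = pmf (choice_pmf n u) a * pmf (choice_pmf n a) b"
    using ua by (simp add: B_def measure_pmf_single)
  finally show ?thesis .
qed



lemma zeta3_ge1: "zeta3 \<ge> 1"
proof -
  have s: "summable (\<lambda>i. 1 / (real (Suc i))^3)"
    using inverse_power_summable[of 3, where 'a=real] summable_Suc_iff[of "\<lambda>n. inverse (real n ^ 3)"]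
    by (simp add: divide_inverse del: of_nat_Suc)
  have "(\<Sum>i\<in>{0}. 1 / (real (Suc i))^3) \<le> zeta3"
    unfolding zeta3_def by (rule sum_le_suminf[OF s]) auto
  thus ?thesis by simp
qed

lemma Z_le:
  assumes n: "n \<ge> 21" and v: "v \<in> octV n"
  shows "octZ n v \<le> 1 / ln (real n + 1)"
proof -
  have L: "ln (real n + 1) > 0" using n by simp
  have "ln (real n + 1) \<le> (\<Sum>w\<in>octV n - {v}. 1 / (real (octDist n v w))\<^sup>2)"
    by (rule vertex_lower[OF n v])
  thus ?thesis unfolding octZ_def using L by (simp add: inverse_eq_divide frac_le)
qed

lemma term_bound:
  assumes n: "n \<ge> 21" and u: "u \<in> octV n" and a: "a \<in> octV n" and b: "b \<in> octV n"
    and adj: "octAdj n b u" and ua: "u \<noteq> a" and d1: "octDist n u a \<ge> 2" and d2: "octDist n a b \<ge> 2"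
  shows "pmf (choice_pmf n u) a * pmf (choice_pmf n a) b \<le>
     (1 / ln (real n + 1))\<^sup>2 * hh (nat (max \<bar>fst a - fst u\<bar> \<bar>fst (snd a) - fst (snd u)\<bar>))"
proof -
  define L where "L = ln (real n + 1)"
  define j where "j = nat (max \<bar>fst a - fst u\<bar> \<bar>fst (snd a) - fst (snd u)\<bar>)"
  define D1 where "D1 = octDist n u a"
  define D2 where "D2 = octDist n a b"
  have n1: "n \<ge> 1" using n by simp
  have Lp: "L > 0" using n by (simp add: L_def)
  have ab: "a \<noteq> b" using d2 dist_self[of n a] by auto
  have p1: "pmf (choice_pmf n u) a = octZ n u / (real D1)\<^sup>2"
    using pmf_choice[OF u n1, of a] a ua D1_def by auto
  have p2: "pmf (choice_pmf n a) b = octZ n a / (real D2)\<^sup>2"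
    using pmf_choice[OF a n1, of b] b ab D2_def by auto
  have Z1: "octZ n u \<le> 1 / L" "octZ n u \<ge> 0" using Z_le[OF n u] L_def
    by (auto simp: octZ_def intro!: sum_nonneg)
  have Z2: "octZ n a \<le> 1 / L" "octZ n a \<ge> 0" using Z_le[OF n a] L_def
    by (auto simp: octZ_def intro!: sum_nonneg)
  have c1: "\<bar>fst u - fst a\<bar> \<le> int D1" "\<bar>fst (snd u) - fst (snd a)\<bar> \<le> int D1"
    using dist_coord[OF u a] D1_def by auto
  have c2: "\<bar>fst a - fst b\<bar> \<le> int D2" "\<bar>fst (snd a) - fst (snd b)\<bar> \<le> int D2"
    using dist_coord[OF a b] D2_def by auto
  have c3: "\<bar>fst b - fst u\<bar> \<le> 1" "\<bar>fst (snd b) - fst (snd u)\<bar> \<le> 1"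
    using adj by (auto simp: octAdj_def)
  have j1: "j \<le> D1" using c1 unfolding j_def by (simp add: abs_minus_commute)
  have j2: "j \<le> D2 + 1" using c2 c3 unfolding j_def by linarith
  have m1: "max 2 j \<le> D1" using j1 d1 D1_def by simp
  have m2: "max 2 (j - 1) \<le> D2" using j2 d2 D2_def by simp
  have hb: "1 / ((real D1)\<^sup>2 * (real D2)\<^sup>2) \<le> hh j"
    unfolding hh_def using m1 m2
    by (intro divide_left_mono mult_mono power_mono mult_pos_pos) auto
  have "pmf (choice_pmf n u) a * pmf (choice_pmf n a) b = (octZ n u * octZ n a) * (1 / ((real D1)\<^sup>2 * (real D2)\<^sup>2))"
    using p1 p2 by simp
  also have "\<dots> \<le> ((1/L) * (1/L)) * hh j"
    using Z1 Z2 hb Lp by (intro mult_mono) (auto simp: hh_def)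
  finally show ?thesis by (simp add: L_def j_def power2_eq_square)
qed

lemma prob_bound_large:
  assumes n: "n \<ge> 21" and u: "u \<in> octV n"
  shows "measure_pmf.prob (OSW n) (E6 n u) \<le> (1 / ln (real n + 1))\<^sup>2 * (6 * (2 * (221/80)))"
proof -
  define L where "L = ln (real n + 1)"
  define N where "N = {b \<in> octV n. octAdj n b u}"
  define Pairs where "Pairs = {p \<in> octV n \<times> N. u \<noteq> fst p \<and> octDist n u (fst p) \<ge> 2 \<and> octDist n (fst p) (snd p) \<ge> 2}"
  define g where "g = (\<lambda>a::vtx. (1 / L)\<^sup>2 * hh (nat (max \<bar>fst a - fst u\<bar> \<bar>fst (snd a) - fst (snd u)\<bar>)))"
  define S where "S = (\<lambda>p::vtx \<times> vtx. {c. c u = fst p \<and> c (fst p) = snd p})"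
  have finN: "finite N" using finite_octV by (simp add: N_def)
  have finP: "finite Pairs" unfolding Pairs_def using finite_octV finN by (auto intro: finite_subset)
  have n1: "n \<ge> 1" using n by simp
  have sub: "E6 n u \<subseteq> (\<Union>p\<in>Pairs. S p)"
  proof
    fix c assume "c \<in> E6 n u"
    then obtain a b where ab: "a \<in> octV n" "b \<in> octV n" "u \<noteq> a" "a \<noteq> b" "u \<noteq> b"
      "type_w n c u a" "type_w n c a b" "type_s n b u" unfolding E6_def by blast
    hence "(a,b) \<in> Pairs" "c \<in> S (a,b)"
      by (auto simp: Pairs_def N_def type_w_def type_s_def S_def)
    thus "c \<in> (\<Union>p\<in>Pairs. S p)" by blast
  qed
  have "measure_pmf.prob (OSW n) (E6 n u) \<le> measure_pmf.prob (OSW n) (\<Union>p\<in>Pairs. S p)"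
    by (rule measure_pmf.finite_measure_mono[OF sub]) simp
  also have "\<dots> \<le> (\<Sum>p\<in>Pairs. measure_pmf.prob (OSW n) (S p))"
    by (rule measure_pmf.finite_measure_subadditive_finite[OF finP]) simp
  also have "\<dots> \<le> (\<Sum>p\<in>Pairs. g (fst p))"
  proof (rule sum_mono)
    fix p assume p: "p \<in> Pairs"
    obtain a b where pe: "p = (a,b)" by (cases p) auto
    have h: "a \<in> octV n" "b \<in> octV n" "octAdj n b u" "u \<noteq> a" "octDist n u a \<ge> 2" "octDist n a b \<ge> 2"
      using p pe by (auto simp: Pairs_def N_def)
    have "measure_pmf.prob (OSW n) (S p) = pmf (choice_pmf n u) a * pmf (choice_pmf n a) b"
      unfolding S_def pe using prob_pair[OF u h(1) h(4)] by simp
    also have "\<dots> \<le> g (fst p)"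
      unfolding g_def L_def pe using term_bound[OF n u h(1) h(2) h(3) h(4) h(5) h(6)] by simp
    finally show "measure_pmf.prob (OSW n) (S p) \<le> g (fst p)" .
  qed
  also have "\<dots> \<le> (\<Sum>p\<in>octV n \<times> N. g (fst p))"
    by (intro sum_mono2 finite_cartesian_product finite_octV finN)
       (auto simp: Pairs_def g_def hh_def)
  also have "\<dots> = (\<Sum>a\<in>octV n. \<Sum>b\<in>N. g a)"
    by (simp only: sum.cartesian_product split_def)
  also have "\<dots> = real (card N) * (\<Sum>a\<in>octV n. g a)"
    by (simp add: sum_distrib_left)
  also have "\<dots> \<le> 6 * ((1 / L)\<^sup>2 * (2 * (221/80)))"
  proof (rule mult_mono)
    show "real (card N) \<le> 6" using nbr_card[OF u n1] by (simp add: N_def)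
    have "(\<Sum>a\<in>octV n. g a) = (1/L)\<^sup>2 * (\<Sum>a\<in>octV n. hh (nat (max \<bar>fst a - fst u\<bar> \<bar>fst (snd a) - fst (snd u)\<bar>)))"
      by (simp add: g_def sum_distrib_left)
    also have "\<dots> \<le> (1/L)\<^sup>2 * (2 * (221/80))"
      by (intro mult_left_mono Vsum[OF u]) simp
    finally show "(\<Sum>a\<in>octV n. g a) \<le> (1/L)\<^sup>2 * (2 * (221/80))" .
  qed (auto simp: g_def hh_def intro!: sum_nonneg)
  finally show ?thesis by (simp add: L_def)
qed

theorem lemma10:
  fixes n :: nat and u :: vtx
  assumes "n \<ge> 1" and "u \<in> octV n"
  shows "measure_pmf.prob (OSW n) (E6 n u) < 36 * zeta3 / (ln (real n + 1))\<^sup>2"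
proof -
  define L where "L = ln (real n + 1)"
  have Lp: "L > 0" using assms(1) by (simp add: L_def)
  have z: "zeta3 \<ge> 1" by (rule zeta3_ge1)
  have "36 / L\<^sup>2 \<le> 36 * zeta3 / L\<^sup>2" using z Lp by (simp add: divide_right_mono)
  moreover have "measure_pmf.prob (OSW n) (E6 n u) < 36 / L\<^sup>2"
  proof (cases "L < 6")
    case True
    have "L\<^sup>2 < 6\<^sup>2" using True Lp by (intro power_strict_mono) auto
    hence "1 < 36 / L\<^sup>2" using Lp by (simp add: field_simps)
    thus ?thesis using measure_pmf.prob_le_1[of "OSW n" "E6 n u"] by linarith
  next
    case False
    have "exp (6::real) = exp 2 * exp 2 * exp 2" by (simp add: exp_add[symmetric])
    also have "\<dots> \<ge> 3 * 3 * 3" using exp_ge_add_one_self[of "2::real"]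
      by (intro mult_mono) auto
    finally have e6: "exp (6::real) \<ge> 27" by simp
    have "exp L = real n + 1" unfolding L_def by simp
    moreover have "exp 6 \<le> exp L" using False by simp
    ultimately have "real n + 1 \<ge> 27" using e6 by linarith
    hence n21: "n \<ge> 21" by simp
    have "measure_pmf.prob (OSW n) (E6 n u) \<le> (1 / L)\<^sup>2 * (6 * (2 * (221/80)))"
      using prob_bound_large[OF n21 assms(2)] by (simp add: L_def)
    also have "\<dots> < 36 / L\<^sup>2" using Lp by (simp add: field_simps)
    finally show ?thesis .
  qed
  ultimately show ?thesis unfolding L_def by linarith
qed

end
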